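(* Let $T:\mathbb N\to\mathbb N$ satisfy $T(n)\ge n$ for all $n$. For a well-typed program $p$ and input $\tilde v$ write $n=\mathrm{sz}(\tilde v)$. The following three statements are equivalent: (1) every well-typed CorePolyC program $p$ satisfies $\mathrm{ic}(p,\tilde v)=O(T(n))$; (2) every well-typed CorePolyC program $p$ satisfies $\mathrm{sz}([\![p]\!](\tilde v))=O(T(n))$; (3) every well-typed CorePolyC program $p$ satisfies $\mathrm{sz}(\mathscr E_{p,\tilde v})=O(T(n))$. (Here the constants in $O(\cdot)$ may depend on $p$ but not on $\tilde v$.)
   Context: CorePolyC. Types are $\mathtt{iint},\mathtt{int},\mathtt{bool}$; $\mathsf{Int}=\{\mathtt{iint},\mathtt{int}\}$, ordered by $\mathtt{iint}\preccurlyeq\mathtt{int}$. Values are unbounded integers ($\mathbb Z$) and booleans $\#t,\#f$. Expressions: variables $x$; constants (nonempty decimal digit strings denoting natural numbers; $\mathtt{true}$, $\mathtt{false}$); operator applications $\mathtt{op}(e_1,\dots,e_m)$; parenthesized $(e)$. Operators and semantics: unary $-$ (negation); binary $+,-,/,\%$ (integer addition, subtraction, division, remainder, with division and remainder by $0$ returning $0$); $\mathtt{size}$, with $\mathtt{size}(v)=\lceil\log_2(\mathrm{abs}(v)+1)\rceil$; comparisons $\texttt{>=},\texttt{<=},\texttt{>},\texttt{<},\texttt{==},\texttt{!=}$ on integers returning booleans; boolean $\texttt{!},\texttt{\&\&},\texttt{||}$. Statements: declaration $t\ x;$; assignment $x=e;$; block $\{s_1\dots s_m\}$; conditional $\mathbf{if}(e)\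 s_1\ \mathbf{else}\ s_2$; loop $\mathbf{for}(x<\mathtt{size}(e))\ s$ (loop bounds are always syntactically of the form $\mathtt{size}(e)$). A program is $\mathbf{int\ main}(\mathbf{int}\ x_1,\dots,\mathbf{int}\ x_m)\{s_1\dots s_k\ \mathbf{return}\ e;\}$. Semantics (big-step). A store $\Sigma$ is a finite partial map from variables to values; $\Sigma[x\mapsto v]$ is the update. $\Sigma\vdash e\Downarrow v$: a variable $x\in\mathrm{dom}\,\Sigma$ evaluates to $\Sigma(x)$, constants to their value, $\mathtt{op}(e_1,\dots,e_m)$ to $\mathtt{op}$ applied to the values of the $e_i$. $\Sigma\vdash s\Downarrow\Sigma'$: $t\ x;$ gives $\Sigma[x\mapsto 0]$ if $t\in\mathsf{Int}$ and $\Sigma[x\mapsto\#f]$ if $t=\mathtt{bool}$; $x=e;$ (with $x\in\mathrm{dom}\,\Sigma$) gives $\Sigma[x\mapsto v]$ where $\Sigma\vdash e\Downarrow v$; a sequence or block executes its statements in order threading the store (a block returns the final store); a conditional evaluates its guard to a boolean and executes the corresponding branch; $\mathbf{for}(x<e)\ s$ evaluates $e$ once to an integer $i$, sets $\Sigma_0=\Sigma$, executes $s$ from $\Sigma_j[x\mapsto j]$ obtaining $\Sigma_{j+1}$ for $j=0,\dots,i-1$, and ends in $\Sigma_i$ (i.e. in $\Sigma$ if $i\le 0$). A program on inputs $v_1,\dots,v_m$ runs its statements from the store $[x_1\mapsto v_1,\dots,x_m\mapsto v_m]$ and outputs the value of its return expression in the resulting store. Type system. A typing environment $\Gamma$ is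 a finite partial map from variables to types; $\ell\in\{\#t,\#f\}$ is the loop indicator. Expression typing $\Gamma,\ell\vdash e:t$: a variable $x\in\mathrm{dom}\,\Gamma$ has type $\Gamma(x)$; digit literals have type $\mathtt{iint}$, $\mathtt{true},\mathtt{false}$ have type $\mathtt{bool}$; $\texttt{!},\texttt{\&\&},\texttt{||}$ take $\mathtt{bool}$ arguments to $\mathtt{bool}$; comparisons take arguments with types in $\mathsf{Int}$ to $\mathtt{bool}$; $+,-,/,\%$ take arguments with types in $\mathsf{Int}$ to their supremum under $\preccurlyeq$ ($\mathtt{iint}$ iff all arguments are $\mathtt{iint}$); $\mathtt{size}$ takes only an $\mathtt{iint}$ argument, giving $\mathtt{iint}$; parentheses preserve types. Statement typing $\Gamma,\ell\vdash s:\Gamma'$: $t\ x;$ is typable iff $x\notin\mathrm{dom}\,\Gamma$ and not($\ell=\#t$ and $t=\mathtt{iint}$), giving $\Gamma[x\mapsto t]$; $x=e;$ is typable iff $x\in\mathrm{dom}\,\Gamma$, not($\ell=\#t$ and $\Gamma(x)=\mathtt{iint}$), and $\Gamma,\ell\vdash e:t$ with $t,\Gamma(x)$ both in $\mathsf{Int}$ or both $\mathtt{bool}$, giving $\Gamma$; a sequence $s_1\dots s_m$ threads $\Gamma_0=\Gamma$, $\Gamma_{i-1},\ell\vdash s_i:\Gamma_i$, giving $\Gamma_m$; a block $\{\tilde s\}$ is typable if its sequence is, giving $\Gamma$; a conditional needs a guard of type $\mathtt{bool}$ and both branches typable under $\Gamma,\ell$, giving $\Gamma$; $\mathbf{for}(x<e)\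 s$ needs $\Gamma,\ell\vdash e:\mathtt{iint}$, $x\notin\mathrm{dom}\,\Gamma$, and $\Gamma[x\mapsto\mathtt{iint}],\#t\vdash s:\Gamma'$ for some $\Gamma'$, giving $\Gamma$. A program is well-typed if its statements are typable starting from $[x_1\mapsto\mathtt{int},\dots,x_m\mapsto\mathtt{int}]$ with $\ell=\#f$, ending in some $\Gamma'$, and its return expression has a type in $\mathsf{Int}$ under $\Gamma',\#f$. A well-typed program $p$ with $m$ inputs computes a total function $[\![p]\!]:\mathbb Z^m\to\mathbb Z$. Sizes: $\mathrm{sz}(v)=\lceil\log_2(\mathrm{abs}(v)+1)\rceil$ for $v\in\mathbb Z$, $\mathrm{sz}(\#t)=\mathrm{sz}(\#f)=1$, $\mathrm{sz}(v_1,\dots,v_m)=\sum_i\mathrm{sz}(v_i)$, and $\mathrm{sz}(\Sigma)=\max_{x\in\mathrm{dom}\,\Sigma}\mathrm{sz}(\Sigma(x))$ ($0$ if empty). $\mathscr E_{p,\tilde v}$ is the (unique) semantic derivation tree of the run of $p$ on input $\tilde v$, and $\mathrm{sz}(\mathscr E_{p,\tilde v})$ is the maximum of $\mathrm{sz}(\Sigma')$ over all stores $\Sigma'$ occurring in it (the largest intermediate value). Instruction count (cost semantics) $\mathrm{ic}$: a variable or constant costs $1$; a parenthesized expression costs $1$ plus its content; $\mathtt{op}(e_1,\dots,e_m)$ costs $1$ plus the costs of the $e_i$; a declaration costs $1$; an assignment costs $1$ plus the cost of its expression; a block costs $1$ plus the cost of its sequence; a sequence costs the sum of its statements' costs; a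 conditional costs the guard's cost plus the cost of the executed branch; a loop costs the cost of evaluating its bound plus the sum of the costs of all executed iterations of its body; a program costs its statements' cost plus the cost of its return expression. $\mathrm{ic}(p,\tilde v)$ is the cost of running $p$ on $\tilde v$. *)

theory Defs
  imports Complex_Main "HOL-Library.Signed_Division"
begin

datatype ty = TIInt | TInt | TBool

definition int_tys :: "ty set" where "int_tys = {TIInt, TInt}"

text \<open>supremum w.r.t. iint below int (only used on int types)\<close>
fun tsup :: "ty \<Rightarrow> ty \<Rightarrow> ty" where
  "tsup TIInt TIInt = TIInt"
| "tsup _ _ = TInt"

datatype val = IntV int | BoolV bool

text \<open>OMinus is used both as unary negation (one argument) and binary subtraction (two).\<close>
datatype oper = OMinus | OPlus | ODiv | OMod | OSize
  | OGe | OLe | OGt | OLt | OEq | ONe | ONot | OAnd | OOr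

datatype exp = Var string | Num nat | TrueC | FalseC | Op oper "exp list" | Paren exp

text \<open>For x e s stands for the loop  for(x < size(e)) s  (bounds are always size(e)).\<close>
datatype stmt = Decl ty string | Assign string exp | Block "stmt list"
  | If exp stmt stmt | For string exp stmt

record prog = params :: "string list" body :: "stmt list" ret :: exp

definition bound_exp :: "exp \<Rightarrow> exp" where "bound_exp e = Op OSize [e]"

definition sz_int :: "int \<Rightarrow> nat" where
  "sz_int v = nat \<lceil>log 2 (real_of_int (\<bar>v\<bar> + 1))\<rceil>"

fun sz_val :: "val \<Rightarrow> nat" where
  "sz_val (IntV v) = sz_int v"
| "sz_val (BoolV b) = 1"

definition sz_inputs :: "int list \<Rightarrow> nat" where
  "sz_inputs vs = sum_list (map sz_int vs)"

type_synonym store = "string \<Rightarrow> val option"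

definition sz_store :: "store \<Rightarrow> nat" where
  "sz_store \<Sigma> = Max (insert 0 (sz_val ` ran \<Sigma>))"

definition cdiv :: "int \<Rightarrow> int \<Rightarrow> int" where
  "cdiv a b = (if b = 0 then 0 else a sdiv b)"
definition cmod :: "int \<Rightarrow> int \<Rightarrow> int" where
  "cmod a b = (if b = 0 then 0 else a smod b)"

definition int2 :: "(int \<Rightarrow> int \<Rightarrow> val) \<Rightarrow> val list \<Rightarrow> val option" where
  "int2 g vs = (case vs of [IntV a, IntV b] \<Rightarrow> Some (g a b) | _ \<Rightarrow> None)"
definition int1 :: "(int \<Rightarrow> val) \<Rightarrow> val list \<Rightarrow> val option" where
  "int1 g vs = (case vs of [IntV a] \<Rightarrow> Some (g a) | _ \<Rightarrow> None)"
definition bool2 :: "(bool \<Rightarrow> bool \<Rightarrow> bool) \<Rightarrow> val list \<Rightarrow> val option" where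
  "bool2 g vs = (case vs of [BoolV a, BoolV b] \<Rightarrow> Some (BoolV (g a b)) | _ \<Rightarrow> None)"

fun apply_op :: "oper \<Rightarrow> val list \<Rightarrow> val option" where
  "apply_op OMinus vs = (if length vs = 1 then int1 (\<lambda>a. IntV (- a)) vs
                         else int2 (\<lambda>a b. IntV (a - b)) vs)"
| "apply_op OPlus vs = int2 (\<lambda>a b. IntV (a + b)) vs"
| "apply_op ODiv vs = int2 (\<lambda>a b. IntV (cdiv a b)) vs"
| "apply_op OMod vs = int2 (\<lambda>a b. IntV (cmod a b)) vs"
| "apply_op OSize vs = int1 (\<lambda>a. IntV (int (sz_int a))) vs"
| "apply_op OGe vs = int2 (\<lambda>a b. BoolV (a \<ge> b)) vs"
| "apply_op OLe vs = int2 (\<lambda>a b. BoolV (a \<le> b)) vs"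
| "apply_op OGt vs = int2 (\<lambda>a b. BoolV (a > b)) vs"
| "apply_op OLt vs = int2 (\<lambda>a b. BoolV (a < b)) vs"
| "apply_op OEq vs = int2 (\<lambda>a b. BoolV (a = b)) vs"
| "apply_op ONe vs = int2 (\<lambda>a b. BoolV (a \<noteq> b)) vs"
| "apply_op ONot vs = (case vs of [BoolV a] \<Rightarrow> Some (BoolV (\<not> a)) | _ \<Rightarrow> None)"
| "apply_op OAnd vs = bool2 (\<and>) vs"
| "apply_op OOr vs = bool2 (\<or>) vs"

fun eval :: "store \<Rightarrow> exp \<Rightarrow> val option" where
  "eval \<Sigma> (Var x) = \<Sigma> x"
| "eval \<Sigma> (Num n) = Some (IntV (int n))"
| "eval \<Sigma> TrueC = Some (BoolV True)"
| "eval \<Sigma> FalseC = Some (BoolV False)"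
| "eval \<Sigma> (Op f es) = Option.bind (those (map (eval \<Sigma>) es)) (apply_op f)"
| "eval \<Sigma> (Paren e) = eval \<Sigma> e"

fun ecost :: "exp \<Rightarrow> nat" where
  "ecost (Var x) = 1"
| "ecost (Num n) = 1"
| "ecost TrueC = 1"
| "ecost FalseC = 1"
| "ecost (Op f es) = 1 + sum_list (map ecost es)"
| "ecost (Paren e) = 1 + ecost e"

text \<open>exec \<Sigma> s \<Sigma>' c m: running s from \<Sigma> ends in \<Sigma>', costs c instructions, and m is
  the maximum of sz over all stores occurring in the derivation tree.\<close>

definition default_val :: "ty \<Rightarrow> val" where
  "default_val t = (if t = TBool then BoolV False else IntV 0)"

inductive exec :: "store \<Rightarrow> stmt \<Rightarrow> store \<Rightarrow> nat \<Rightarrow> nat \<Rightarrow> bool"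
  and execs :: "store \<Rightarrow> stmt list \<Rightarrow> store \<Rightarrow> nat \<Rightarrow> nat \<Rightarrow> bool"
  and exec_loop :: "string \<Rightarrow> stmt \<Rightarrow> int \<Rightarrow> int \<Rightarrow> store \<Rightarrow> store \<Rightarrow> nat \<Rightarrow> nat \<Rightarrow> bool"
where
  ExDecl: "\<Sigma>' = \<Sigma>(x \<mapsto> default_val t) \<Longrightarrow>
     exec \<Sigma> (Decl t x) \<Sigma>' 1 (max (sz_store \<Sigma>) (sz_store \<Sigma>'))"
| ExAssign: "x \<in> dom \<Sigma> \<Longrightarrow> eval \<Sigma> e = Some v \<Longrightarrow> \<Sigma>' = \<Sigma>(x \<mapsto> v) \<Longrightarrow>
     exec \<Sigma> (Assign x e) \<Sigma>' (1 + ecost e) (max (sz_store \<Sigma>) (sz_store \<Sigma>'))"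
| ExBlock: "execs \<Sigma> ss \<Sigma>' c m \<Longrightarrow>
     exec \<Sigma> (Block ss) \<Sigma>' (1 + c) (max (sz_store \<Sigma>) m)"
| ExIfT: "eval \<Sigma> e = Some (BoolV True) \<Longrightarrow> exec \<Sigma> s1 \<Sigma>' c m \<Longrightarrow>
     exec \<Sigma> (If e s1 s2) \<Sigma>' (ecost e + c) (max (sz_store \<Sigma>) m)"
| ExIfF: "eval \<Sigma> e = Some (BoolV False) \<Longrightarrow> exec \<Sigma> s2 \<Sigma>' c m \<Longrightarrow>
     exec \<Sigma> (If e s1 s2) \<Sigma>' (ecost e + c) (max (sz_store \<Sigma>) m)"
| ExFor: "eval \<Sigma> (bound_exp e) = Some (IntV i) \<Longrightarrow> exec_loop x s 0 i \<Sigma> \<Sigma>' c m \<Longrightarrow>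
     exec \<Sigma> (For x e s) \<Sigma>' (ecost (bound_exp e) + c) (max (sz_store \<Sigma>) m)"
| ExNil: "execs \<Sigma> [] \<Sigma> 0 (sz_store \<Sigma>)"
| ExCons: "exec \<Sigma> s \<Sigma>1 c1 m1 \<Longrightarrow> execs \<Sigma>1 ss \<Sigma>' c2 m2 \<Longrightarrow>
     execs \<Sigma> (s # ss) \<Sigma>' (c1 + c2) (max m1 m2)"
| LoopDone: "\<not> j < i \<Longrightarrow> exec_loop x s j i \<Sigma> \<Sigma> 0 (sz_store \<Sigma>)"
| LoopStep: "j < i \<Longrightarrow> exec (\<Sigma>(x \<mapsto> IntV j)) s \<Sigma>1 c1 m1 \<Longrightarrow>
     exec_loop x s (j + 1) i \<Sigma>1 \<Sigma>' c2 m2 \<Longrightarrow>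
     exec_loop x s j i \<Sigma> \<Sigma>' (c1 + c2) (max (sz_store \<Sigma>) (max m1 m2))"

text \<open>run p vs v c m: program p on input vs outputs v, with ic(p,vs) = c and
  sz of the derivation tree = m.\<close>
inductive run :: "prog \<Rightarrow> int list \<Rightarrow> int \<Rightarrow> nat \<Rightarrow> nat \<Rightarrow> bool" where
  "length vs = length (params p) \<Longrightarrow>
   \<Sigma>0 = Map.empty (params p [\<mapsto>] map IntV vs) \<Longrightarrow>
   execs \<Sigma>0 (body p) \<Sigma>' c m \<Longrightarrow>
   eval \<Sigma>' (ret p) = Some (IntV v) \<Longrightarrow>
   run p vs v (c + ecost (ret p)) (max (sz_store \<Sigma>0) m)"

type_synonym env = "string \<Rightarrow> ty option"

inductive has_ty :: "env \<Rightarrow> bool \<Rightarrow> exp \<Rightarrow> ty \<Rightarrow> bool" where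
  TyVar: "\<Gamma> x = Some t \<Longrightarrow> has_ty \<Gamma> l (Var x) t"
| TyNum: "has_ty \<Gamma> l (Num n) TIInt"
| TyTrue: "has_ty \<Gamma> l TrueC TBool"
| TyFalse: "has_ty \<Gamma> l FalseC TBool"
| TyNot: "has_ty \<Gamma> l e TBool \<Longrightarrow> has_ty \<Gamma> l (Op ONot [e]) TBool"
| TyBool2: "f \<in> {OAnd, OOr} \<Longrightarrow> has_ty \<Gamma> l e1 TBool \<Longrightarrow> has_ty \<Gamma> l e2 TBool \<Longrightarrow>
     has_ty \<Gamma> l (Op f [e1, e2]) TBool"
| TyCmp: "f \<in> {OGe, OLe, OGt, OLt, OEq, ONe} \<Longrightarrow> has_ty \<Gamma> l e1 t1 \<Longrightarrow> has_ty \<Gamma> l e2 t2 \<Longrightarrow>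
     t1 \<in> int_tys \<Longrightarrow> t2 \<in> int_tys \<Longrightarrow> has_ty \<Gamma> l (Op f [e1, e2]) TBool"
| TyNeg: "has_ty \<Gamma> l e t \<Longrightarrow> t \<in> int_tys \<Longrightarrow> has_ty \<Gamma> l (Op OMinus [e]) t"
| TyArith: "f \<in> {OPlus, OMinus, ODiv, OMod} \<Longrightarrow> has_ty \<Gamma> l e1 t1 \<Longrightarrow> has_ty \<Gamma> l e2 t2 \<Longrightarrow>
     t1 \<in> int_tys \<Longrightarrow> t2 \<in> int_tys \<Longrightarrow> has_ty \<Gamma> l (Op f [e1, e2]) (tsup t1 t2)"
| TySize: "has_ty \<Gamma> l e TIInt \<Longrightarrow> has_ty \<Gamma> l (Op OSize [e]) TIInt"
| TyParen: "has_ty \<Gamma> l e t \<Longrightarrow> has_ty \<Gamma> l (Paren e) t"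

definition compat :: "ty \<Rightarrow> ty \<Rightarrow> bool" where
  "compat t t' = ((t \<in> int_tys \<and> t' \<in> int_tys) \<or> (t = TBool \<and> t' = TBool))"

inductive st_ty :: "env \<Rightarrow> bool \<Rightarrow> stmt \<Rightarrow> env \<Rightarrow> bool"
  and seq_ty :: "env \<Rightarrow> bool \<Rightarrow> stmt list \<Rightarrow> env \<Rightarrow> bool"
where
  TDecl: "\<Gamma> x = None \<Longrightarrow> \<not> (l \<and> t = TIInt) \<Longrightarrow> st_ty \<Gamma> l (Decl t x) (\<Gamma>(x \<mapsto> t))"
| TAssign: "\<Gamma> x = Some tx \<Longrightarrow> \<not> (l \<and> tx = TIInt) \<Longrightarrow> has_ty \<Gamma> l e t \<Longrightarrow> compat t tx \<Longrightarrow>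
     st_ty \<Gamma> l (Assign x e) \<Gamma>"
| TBlock: "seq_ty \<Gamma> l ss \<Gamma>' \<Longrightarrow> st_ty \<Gamma> l (Block ss) \<Gamma>"
| TIf: "has_ty \<Gamma> l e TBool \<Longrightarrow> st_ty \<Gamma> l s1 \<Gamma>1 \<Longrightarrow> st_ty \<Gamma> l s2 \<Gamma>2 \<Longrightarrow>
     st_ty \<Gamma> l (If e s1 s2) \<Gamma>"
| TFor: "has_ty \<Gamma> l (bound_exp e) TIInt \<Longrightarrow> \<Gamma> x = None \<Longrightarrow>
     st_ty (\<Gamma>(x \<mapsto> TIInt)) True s \<Gamma>' \<Longrightarrow> st_ty \<Gamma> l (For x e s) \<Gamma>"
| TNil: "seq_ty \<Gamma> l [] \<Gamma>"
| TCons: "st_ty \<Gamma> l s \<Gamma>1 \<Longrightarrow> seq_ty \<Gamma>1 l ss \<Gamma>' \<Longrightarrow> seq_ty \<Gamma> l (s # ss) \<Gamma>'"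

definition well_typed :: "prog \<Rightarrow> bool" where
  "well_typed p = (\<exists>\<Gamma>' t.
     seq_ty (Map.empty (params p [\<mapsto>] replicate (length (params p)) TInt)) False (body p) \<Gamma>'
     \<and> has_ty \<Gamma>' False (ret p) t \<and> t \<in> int_tys)"

definition bigO_run :: "(nat \<Rightarrow> nat) \<Rightarrow> prog \<Rightarrow> (int \<Rightarrow> nat \<Rightarrow> nat \<Rightarrow> nat) \<Rightarrow> bool" where
  "bigO_run T p g = (\<exists>C N. \<forall>vs v c m. run p vs v c m \<longrightarrow> sz_inputs vs \<ge> N \<longrightarrow>
      g v c m \<le> C * T (sz_inputs vs))"

end

theory Submission
  imports Defs
begin

lemma sz_le_iff: "sz_int a \<le> k \<longleftrightarrow> \<bar>a\<bar> < 2^k"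
proof -
  have "sz_int a \<le> k \<longleftrightarrow> log 2 (real_of_int (\<bar>a\<bar> + 1)) \<le> real k"
    unfolding sz_int_def by (simp add: nat_le_iff ceiling_le_iff)
  also have "\<dots> \<longleftrightarrow> real_of_int (\<bar>a\<bar> + 1) \<le> 2 powr real k"
    by (subst log_le_iff) auto
  also have "\<dots> \<longleftrightarrow> \<bar>a\<bar> + 1 \<le> 2^k"
  proof -
    have "(2::real) powr real k = real_of_int (2^k)" by (simp add: powr_realpow)
    thus ?thesis by (simp only: of_int_le_iff)
  qed
  finally show ?thesis by linarith
qed

lemma sz_less: "\<bar>a\<bar> < 2 ^ sz_int a"
  using sz_le_iff by blast

lemma sz_mono: "\<bar>a\<bar> \<le> \<bar>b\<bar> \<Longrightarrow> sz_int a \<le> sz_int b"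
  using sz_le_iff sz_less by (meson le_less_trans)

lemma sz_neg: "sz_int (- a) = sz_int a"
  by (simp add: sz_int_def)

lemma sz_add: "sz_int (a + b) \<le> max (sz_int a) (sz_int b) + 1"
proof -
  let ?k = "max (sz_int a) (sz_int b)"
  have "\<bar>a\<bar> < 2^?k" using sz_less[of a]
    by (meson le_less_trans less_le_trans max.cobounded1 one_le_numeral power_increasing linorder_not_le order_less_imp_le)
  moreover have "\<bar>b\<bar> < 2^?k" using sz_less[of b]
    by (meson less_le_trans max.cobounded2 one_le_numeral power_increasing)
  ultimately have "\<bar>a + b\<bar> < 2^(?k+1)" by simp
  thus ?thesis using sz_le_iff by blast
qed

lemma sz_diff: "sz_int (a - b) \<le> max (sz_int a) (sz_int b) + 1"
  using sz_add[of a "-b"] by (simp add: sz_neg)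

lemma sz_nat: "sz_int (int n) \<le> n"
proof -
  have "int n < 2 ^ n" by (metis less_exp of_nat_less_iff of_nat_numeral of_nat_power)
  thus ?thesis using sz_le_iff by simp
qed

lemma sz_cdiv: "sz_int (cdiv a b) \<le> sz_int a"
  using sdiv_int_range[of a b] by (auto simp: cdiv_def intro!: sz_mono)

lemma sz_cmod: "sz_int (cmod a b) \<le> sz_int b"
  using smod_int_range[of b a] by (auto simp: cmod_def intro!: sz_mono)

lemma sz_pow: "k < sz_int (2^k)"
  using sz_le_iff[of "2^k" k] by simp

lemma sz_zero: "sz_int 0 = 0" by (simp add: sz_int_def)

lemma ecost_pos: "ecost e \<ge> 1"
  by (cases e) auto

lemma sz_store_ge: "finite (dom \<Sigma>) \<Longrightarrow> \<Sigma> x = Some v \<Longrightarrow> sz_val v \<le> sz_store \<Sigma>"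
  unfolding sz_store_def by (rule Max_ge) (auto simp: finite_ran ranI)

lemma sz_store_le: "finite (dom \<Sigma>) \<Longrightarrow> (\<And>v. v \<in> ran \<Sigma> \<Longrightarrow> sz_val v \<le> k) \<Longrightarrow> sz_store \<Sigma> \<le> k"
  unfolding sz_store_def by (subst Max_le_iff) (auto simp: finite_ran)

lemma ran_upd_sub: "ran (\<Sigma>(x \<mapsto> v)) \<subseteq> insert v (ran \<Sigma>)"
  by (auto simp: ran_def)

lemma sz_store_upd: "finite (dom \<Sigma>) \<Longrightarrow> sz_store (\<Sigma>(x \<mapsto> v)) \<le> max (sz_store \<Sigma>) (sz_val v)"
  apply (rule sz_store_le)
   apply simp
  using ran_upd_sub[of \<Sigma> x v] by (auto simp: ran_def dest: sz_store_ge[of \<Sigma>] intro: le_max_iff_disj[THEN iffD2])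

lemma int2_Some: "int2 g vs = Some v \<Longrightarrow> \<exists>a b. vs = [IntV a, IntV b] \<and> v = g a b"
  by (auto simp: int2_def split: list.splits val.splits)
lemma int1_Some: "int1 g vs = Some v \<Longrightarrow> \<exists>a. vs = [IntV a] \<and> v = g a"
  by (auto simp: int1_def split: list.splits val.splits)
lemma bool2_Some: "bool2 g vs = Some v \<Longrightarrow> \<exists>a b. v = BoolV (g a b)"
  by (auto simp: bool2_def split: list.splits val.splits)

lemma apply_op_sz:
  assumes "apply_op f vs = Some v" "\<And>w. w \<in> set vs \<Longrightarrow> sz_val w \<le> B"
  shows "sz_val v \<le> B + 1"
proof -
  have i2: "sz_int a \<le> B \<and> sz_int b \<le> B" if "vs = [IntV a, IntV b]" for a b
    using assms(2) that by force
  have i1: "sz_int a \<le> B" if "vs = [IntV a]" for a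
    using assms(2) that by force
  show ?thesis
  proof (cases f)
    case OMinus
    show ?thesis
    proof (cases "length vs = 1")
      case True
      then obtain a where "vs = [IntV a]" "v = IntV (- a)" using assms(1) OMinus int1_Some by fastforce
      then show ?thesis using i1 sz_neg by simp
    next
      case False
      then obtain a b where "vs = [IntV a, IntV b]" "v = IntV (a - b)" using assms(1) OMinus int2_Some by fastforce
      then show ?thesis using i2 sz_diff[of a b] by (auto simp: max_def split: if_splits)
    qed
  next
    case OPlus
    then obtain a b where "vs = [IntV a, IntV b]" "v = IntV (a + b)" using assms(1) int2_Some by fastforce
    then show ?thesis using i2 sz_add[of a b] by (auto simp: max_def split: if_splits)
  next
    case ODiv
    then obtain a b where "vs = [IntV a, IntV b]" "v = IntV (cdiv a b)" using assms(1) int2_Some by fastforce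
    then show ?thesis using i2 sz_cdiv[of a b] by (auto simp: max_def split: if_splits)
  next
    case OMod
    then obtain a b where "vs = [IntV a, IntV b]" "v = IntV (cmod a b)" using assms(1) int2_Some by fastforce
    then show ?thesis using i2 sz_cmod[of a b] by (auto simp: max_def split: if_splits)
  next
    case OSize
    then obtain a where "vs = [IntV a]" "v = IntV (int (sz_int a))" using assms(1) int1_Some by fastforce
    then show ?thesis using i1 sz_nat[of "sz_int a"] by simp
  next
    case ONot
    then show ?thesis using assms(1) by (auto split: list.splits val.splits)
  next
    case OAnd then show ?thesis using assms(1) bool2_Some by fastforce
  next
    case OOr then show ?thesis using assms(1) bool2_Some by fastforce
  qed (use assms(1) int2_Some in fastforce)+
qed

lemma those_Some: "those xs = Some ys \<Longrightarrow> y \<in> set ys \<Longrightarrow> \<exists>x\<in>set xs. x = Some y"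
proof (induction xs arbitrary: ys)
  case Nil then show ?case by simp
next
  case (Cons a xs)
  then show ?case by (auto split: option.splits)
qed

fun elit :: "exp \<Rightarrow> nat" where
  "elit (Num n) = n"
| "elit (Op f es) = sum_list (map elit es)"
| "elit (Paren e) = elit e"
| "elit _ = 0"

lemma eval_sz: "finite (dom \<Sigma>) \<Longrightarrow> eval \<Sigma> e = Some v \<Longrightarrow> elit e \<le> L \<Longrightarrow> sz_val v \<le> max (sz_store \<Sigma>) L + ecost e"
proof (induction e arbitrary: v)
  case (Var x)
  then show ?case using sz_store_ge by fastforce
next
  case (Num n)
  then show ?case using sz_nat[of n] by auto
next
  case (Op f es)
  from Op.prems obtain vs where vs: "those (map (eval \<Sigma>) es) = Some vs" "apply_op f vs = Some v"
    by (auto split: Option.bind_splits)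
  have "sz_val w \<le> max (sz_store \<Sigma>) L + sum_list (map ecost es)" if w: "w \<in> set vs" for w
  proof -
    obtain e where e: "e \<in> set es" "eval \<Sigma> e = Some w" using those_Some[OF vs(1) w] by auto
    have "elit e \<le> L" using Op.prems(3) e(1) member_le_sum_list[of "elit e" "map elit es"] by auto
    have "sz_val w \<le> max (sz_store \<Sigma>) L + ecost e" using Op.IH[OF e(1) Op.prems(1) e(2) \<open>elit e \<le> L\<close>] .
    also have "ecost e \<le> sum_list (map ecost es)" using e(1) by (simp add: member_le_sum_list)
    finally show ?thesis by simp
  qed
  from apply_op_sz[OF vs(2) this] show ?case by simp
qed auto

fun slit :: "stmt \<Rightarrow> nat" where
  "slit (Decl t x) = 0"
| "slit (Assign x e) = elit e"
| "slit (Block ss) = sum_list (map slit ss)"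
| "slit (If e s1 s2) = elit e + slit s1 + slit s2"
| "slit (For x e s) = elit e + slit s"

lemma sz_default: "sz_val (default_val t) \<le> 1"
  by (simp add: default_val_def sz_zero)

lemma sz_store_upd': "finite (dom \<Sigma>) \<Longrightarrow> sz_val v \<le> k \<Longrightarrow> sz_store \<Sigma> \<le> k \<Longrightarrow> sz_store (\<Sigma>(x \<mapsto> v)) \<le> k"
  using sz_store_upd[of \<Sigma> x v] by simp

lemma exec_sz:
 "exec \<Sigma> s \<Sigma>' c m \<Longrightarrow> finite (dom \<Sigma>) \<Longrightarrow> slit s \<le> L \<Longrightarrow>
   finite (dom \<Sigma>') \<and> sz_store \<Sigma>' \<le> max (sz_store \<Sigma>) L + c \<and> m \<le> max (sz_store \<Sigma>) L + c \<and> 1 \<le> c \<and> sz_store \<Sigma>' \<le> m"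
 "execs \<Sigma> ss \<Sigma>' c m \<Longrightarrow> finite (dom \<Sigma>) \<Longrightarrow> (\<forall>s\<in>set ss. slit s \<le> L) \<Longrightarrow>
   finite (dom \<Sigma>') \<and> sz_store \<Sigma>' \<le> max (sz_store \<Sigma>) L + c \<and> m \<le> max (sz_store \<Sigma>) L + c \<and> sz_store \<Sigma>' \<le> m"
 "exec_loop x s j i \<Sigma> \<Sigma>' c m \<Longrightarrow> finite (dom \<Sigma>) \<Longrightarrow> slit s \<le> L \<Longrightarrow> 0 \<le> j \<Longrightarrow>
   finite (dom \<Sigma>') \<and> sz_store \<Sigma>' \<le> max (sz_store \<Sigma>) (max L (nat j)) + c \<and> m \<le> max (sz_store \<Sigma>) (max L (nat j)) + c \<and> sz_store \<Sigma>' \<le> m"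
proof (induction rule: exec_execs_exec_loop.inducts)
  case (ExDecl \<Sigma>' \<Sigma> x t)
  have a: "sz_store \<Sigma>' \<le> max (sz_store \<Sigma>) L + 1"
    using ExDecl sz_default[of t] by (auto intro!: sz_store_upd')
  have b: "finite (dom \<Sigma>')" using ExDecl by simp
  show ?case using a b by linarith
next
  case (ExAssign x \<Sigma> e v \<Sigma>')
  have "sz_val v \<le> max (sz_store \<Sigma>) L + ecost e" using eval_sz ExAssign by simp
  then have a: "sz_store \<Sigma>' \<le> max (sz_store \<Sigma>) L + (1 + ecost e)"
    using ExAssign by (auto intro!: sz_store_upd')
  have b: "finite (dom \<Sigma>')" using ExAssign by simp
  show ?case using a b by linarith
next
  case (ExBlock \<Sigma> ss \<Sigma>' c m)
  have "\<forall>s\<in>set ss. slit s \<le> L" using ExBlock.prems member_le_sum_list[of _ "map slit ss"] by fastforce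
  then show ?case using ExBlock by auto
next
  case (ExIfT \<Sigma> e s1 \<Sigma>' c m s2)
  then show ?case using ecost_pos[of e] by auto
next
  case (ExIfF \<Sigma> e s2 \<Sigma>' c m s1)
  then show ?case using ecost_pos[of e] by auto
next
  case (ExFor \<Sigma> e i x s \<Sigma>' c m)
  then show ?case using ecost_pos[of "bound_exp e"] by auto
next
  case (ExNil \<Sigma>)
  then show ?case by auto
next
  case (ExCons \<Sigma> s \<Sigma>1 c1 m1 ss \<Sigma>' c2 m2)
  then show ?case by auto
next
  case (LoopDone j i x s \<Sigma>)
  then show ?case by auto
next
  case (LoopStep j i \<Sigma> x s \<Sigma>1 c1 m1 \<Sigma>' c2 m2)
  let ?B = "max (sz_store \<Sigma>) (max L (nat j))"
  have fin: "finite (dom (\<Sigma>(x \<mapsto> IntV j)))" using LoopStep by simp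
  have "sz_int j \<le> nat j" using sz_nat[of "nat j"] LoopStep.prems by simp
  then have s0: "sz_store (\<Sigma>(x \<mapsto> IntV j)) \<le> max (sz_store \<Sigma>) (nat j)"
    using LoopStep by (auto intro!: sz_store_upd')
  define S0 where "S0 = sz_store (\<Sigma>(x \<mapsto> IntV j))"
  have h: "finite (dom \<Sigma>1) \<and> sz_store \<Sigma>1 \<le> max S0 L + c1 \<and> m1 \<le> max S0 L + c1 \<and> 1 \<le> c1"
    unfolding S0_def using LoopStep.IH(1)[OF fin LoopStep.prems(2)] by blast
  have s0': "S0 \<le> max (sz_store \<Sigma>) (nat j)" using s0 S0_def by simp
  have b: "finite (dom \<Sigma>1)" "sz_store \<Sigma>1 \<le> ?B + c1" "m1 \<le> ?B + c1" "1 \<le> c1"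
    using h s0' by (auto simp: max_def split: if_splits)
  from LoopStep.IH(2)[OF b(1) LoopStep.prems(2)] LoopStep.prems(3)
  have r: "finite (dom \<Sigma>')" "sz_store \<Sigma>' \<le> max (sz_store \<Sigma>1) (max L (nat (j+1))) + c2"
     "m2 \<le> max (sz_store \<Sigma>1) (max L (nat (j+1))) + c2" "sz_store \<Sigma>' \<le> m2" by auto
  have "nat (j+1) = nat j + 1" using LoopStep.prems by simp
  then have M: "max (sz_store \<Sigma>1) (max L (nat (j+1))) \<le> ?B + c1" using b by (auto simp: max_def split: if_splits)
  have s1: "sz_store \<Sigma>' \<le> ?B + (c1 + c2)" using r(2) M by linarith
  have s2: "m2 \<le> ?B + (c1 + c2)" using r(3) M by linarith
  have s3: "m1 \<le> ?B + (c1 + c2)" using b(3) by linarith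
  have s4: "sz_store \<Sigma> \<le> ?B + (c1 + c2)" by linarith
  have "max (sz_store \<Sigma>) (max m1 m2) \<le> ?B + (c1 + c2)" using s2 s3 s4 by simp
  moreover have "sz_store \<Sigma>' \<le> max (sz_store \<Sigma>) (max m1 m2)" using r(4) by linarith
  ultimately show ?case using r(1) s1 by blast
qed

lemma upds_ran: "(m(xs[\<mapsto>]ys)) y = Some w \<Longrightarrow> w \<in> ran m \<union> set ys"
proof (induction xs arbitrary: m ys)
  case Nil then show ?case by (auto simp: ran_def)
next
  case (Cons a xs)
  show ?case
  proof (cases ys)
    case Nil then show ?thesis using Cons.prems by (auto simp: ran_def)
  next
    case (Cons b bs)
    then have "w \<in> ran (m(a \<mapsto> b)) \<union> set bs" using Cons.IH Cons.prems by simp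
    then show ?thesis using ran_upd_sub[of m a b] Cons by auto
  qed
qed

lemma init_store:
  "finite (dom (Map.empty(xs [\<mapsto>] map IntV vs))) \<and> sz_store (Map.empty(xs [\<mapsto>] map IntV vs)) \<le> sz_inputs vs"
proof
  show "finite (dom (Map.empty(xs [\<mapsto>] map IntV vs)))" by simp
  show "sz_store (Map.empty(xs [\<mapsto>] map IntV vs)) \<le> sz_inputs vs"
  proof (rule sz_store_le)
    show "finite (dom (Map.empty(xs [\<mapsto>] map IntV vs)))" by simp
    fix w assume "w \<in> ran (Map.empty(xs [\<mapsto>] map IntV vs))"
    then obtain y where "(Map.empty(xs [\<mapsto>] map IntV vs)) y = Some w" by (auto simp: ran_def)
    from upds_ran[OF this] obtain a where a: "a \<in> set vs" "w = IntV a" by auto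
    then show "sz_val w \<le> sz_inputs vs"
      unfolding sz_inputs_def using member_le_sum_list[of "sz_int a" "map sz_int vs"] by simp
  qed
qed

lemma run_sz:
  assumes "run p vs v c m" "\<forall>s\<in>set (body p). slit s \<le> L" "elit (ret p) \<le> L"
  shows "m \<le> max (sz_inputs vs) L + c \<and> sz_int v \<le> m + L + ecost (ret p)"
  using assms(1)
proof cases
  case (1 \<Sigma>0 \<Sigma>' c' m')
  have i: "finite (dom \<Sigma>0)" "sz_store \<Sigma>0 \<le> sz_inputs vs" using init_store 1 by auto
  have e: "finite (dom \<Sigma>') \<and> sz_store \<Sigma>' \<le> max (sz_store \<Sigma>0) L + c' \<and> m' \<le> max (sz_store \<Sigma>0) L + c' \<and> sz_store \<Sigma>' \<le> m'"
    using exec_sz(2)[OF \<open>execs \<Sigma>0 (body p) \<Sigma>' c' m'\<close> i(1)] assms(2) by blast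
  have "sz_val (IntV v) \<le> max (sz_store \<Sigma>') L + ecost (ret p)"
    using eval_sz[OF _ \<open>eval \<Sigma>' (ret p) = Some (IntV v)\<close> assms(3)] e by blast
  then have v: "sz_int v \<le> max (sz_store \<Sigma>') L + ecost (ret p)" by simp
  show ?thesis
  proof
    show "m \<le> max (sz_inputs vs) L + c" using 1 e i by (auto simp: max_def split: if_splits)
    show "sz_int v \<le> m + L + ecost (ret p)" using 1 e v by (auto simp: max_def split: if_splits)
  qed
qed

fun evars :: "exp \<Rightarrow> string set" where
  "evars (Var x) = {x}"
| "evars (Op f es) = \<Union> (set (map evars es))"
| "evars (Paren e) = evars e"
| "evars _ = {}"

fun svars :: "stmt \<Rightarrow> string set" where
  "svars (Decl t x) = {x}"
| "svars (Assign x e) = insert x (evars e)"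
| "svars (Block ss) = \<Union> (set (map svars ss))"
| "svars (If e s1 s2) = evars e \<union> svars s1 \<union> svars s2"
| "svars (For x e s) = insert x (evars e \<union> svars s)"

fun kb :: "stmt \<Rightarrow> nat" where
  "kb (Decl t x) = 0"
| "kb (Assign x e) = ecost e"
| "kb (Block ss) = sum_list (map kb ss)"
| "kb (If e s1 s2) = ecost e + kb s1 + kb s2"
| "kb (For x e s) = ecost (bound_exp e) + kb s"

definition inc :: "string \<Rightarrow> stmt" where
  "inc z = Assign z (Op OPlus [Var z, Var z])"

fun tr :: "string \<Rightarrow> stmt \<Rightarrow> stmt list" where
  "tr z (Block ss) = [inc z, Block (concat (map (tr z) ss))]"
| "tr z (If e s1 s2) = [inc z, If e (Block (tr z s1)) (Block (tr z s2))]"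
| "tr z (For x e s) = [inc z, For x e (Block (tr z s))]"
| "tr z s = [inc z, s]"

lemma finite_evars: "finite (evars e)"
  by (induction e) auto

lemma finite_svars: "finite (svars s)"
  by (induction s) (auto simp: finite_evars)

lemma eval_indep: "z \<notin> evars e \<Longrightarrow> eval (\<Sigma>(z := w)) e = eval \<Sigma> e"
proof (induction e)
  case (Op f es)
  have "z \<notin> evars e" if "e \<in> set es" for e using Op.prems that by auto
  then have "map (eval (\<Sigma>(z := w))) es = map (eval \<Sigma>) es"
    by (intro map_cong refl Op.IH) auto
  then show ?case by (simp only: eval.simps)
qed auto

inductive_cases execsNilE: "execs \<Sigma> [] \<Sigma>' c m"
inductive_cases execsConsE: "execs \<Sigma> (s # ss) \<Sigma>' c m"

lemma execs_append: "execs \<Sigma> xs \<Sigma>1 c1 m1 \<Longrightarrow> execs \<Sigma>1 ys \<Sigma>2 c2 m2 \<Longrightarrow> \<exists>c m. execs \<Sigma> (xs @ ys) \<Sigma>2 c m"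
proof (induction xs arbitrary: \<Sigma> c1 m1)
  case Nil
  then show ?case by (auto elim: execsNilE)
next
  case (Cons s xs)
  from Cons.prems(1) obtain \<Sigma>a ca ma cb mb where "exec \<Sigma> s \<Sigma>a ca ma" "execs \<Sigma>a xs \<Sigma>1 cb mb"
    by (auto elim: execsConsE)
  moreover obtain c m where "execs \<Sigma>a (xs @ ys) \<Sigma>2 c m"
    using Cons.IH[OF \<open>execs \<Sigma>a xs \<Sigma>1 cb mb\<close> Cons.prems(2)] by blast
  ultimately have "execs \<Sigma> (s # (xs @ ys)) \<Sigma>2 (ca + c) (max ma m)" by (blast intro: ExCons)
  then show ?case by auto
qed

lemma inc_exec: "\<exists>c m. exec (\<Sigma>(z \<mapsto> IntV a)) (inc z) (\<Sigma>(z \<mapsto> IntV (2 * a))) c m"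
proof -
  have e: "eval (\<Sigma>(z \<mapsto> IntV a)) (Op OPlus [Var z, Var z]) = Some (IntV (a + a))"
      by (simp add: int2_def)
  have d: "z \<in> dom (\<Sigma>(z \<mapsto> IntV a))" by simp
  have u: "\<Sigma>(z \<mapsto> IntV (2 * a)) = (\<Sigma>(z \<mapsto> IntV a))(z \<mapsto> IntV (a + a))"
    by simp
  show ?thesis unfolding inc_def using ExAssign[OF d e u] by blast
qed

lemma two_steps: "exec \<Sigma> s1 \<Sigma>1 c1 m1 \<Longrightarrow> exec \<Sigma>1 s2 \<Sigma>2 c2 m2 \<Longrightarrow> \<exists>c m. execs \<Sigma> [s1, s2] \<Sigma>2 c m"
  by (blast intro: ExCons ExNil)

lemma step2: "exec (\<Sigma>(z \<mapsto> IntV (2 * a))) s2 \<Sigma>2 c2 m2 \<Longrightarrow> \<exists>c m. execs (\<Sigma>(z \<mapsto> IntV a)) [inc z, s2] \<Sigma>2 c m"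
  using inc_exec[of \<Sigma> z a] two_steps by blast

lemma pow_step: "2 * a * 2 ^ k = (a::int) * 2 ^ Suc k" by simp

lemma cost_step: "c \<le> (K+1) * k \<Longrightarrow> d \<le> K + 1 \<Longrightarrow> d + c \<le> (K+1) * Suc (k::nat)"
proof -
  assume "c \<le> (K+1) * k" "d \<le> K + 1"
  moreover have "(K+1) * Suc k = (K+1) * k + (K+1)" by simp
  ultimately show ?thesis by linarith
qed

lemma sim:
 "exec \<Sigma> s \<Sigma>' c m \<Longrightarrow> z \<notin> svars s \<Longrightarrow> kb s \<le> K \<Longrightarrow>
    \<forall>a. \<exists>k. (\<exists>c' m'. execs (\<Sigma>(z \<mapsto> IntV a)) (tr z s) (\<Sigma>'(z \<mapsto> IntV (a * 2 ^ k))) c' m') \<and> c \<le> (K+1) * k"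
 "execs \<Sigma> ss \<Sigma>' c m \<Longrightarrow> (\<forall>s\<in>set ss. z \<notin> svars s \<and> kb s \<le> K) \<Longrightarrow>
    \<forall>a. \<exists>k. (\<exists>c' m'. execs (\<Sigma>(z \<mapsto> IntV a)) (concat (map (tr z) ss)) (\<Sigma>'(z \<mapsto> IntV (a * 2 ^ k))) c' m') \<and> c \<le> (K+1) * k"
 "exec_loop x s j i \<Sigma> \<Sigma>' c m \<Longrightarrow> x \<noteq> z \<Longrightarrow> z \<notin> svars s \<Longrightarrow> kb s \<le> K \<Longrightarrow>
    \<forall>a. \<exists>k. (\<exists>c' m'. exec_loop x (Block (tr z s)) j i (\<Sigma>(z \<mapsto> IntV a)) (\<Sigma>'(z \<mapsto> IntV (a * 2 ^ k))) c' m') \<and> c \<le> (K+1) * k"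
proof (induction rule: exec_execs_exec_loop.inducts)
  case (ExDecl \<Sigma>' \<Sigma> x t)
  show ?case
  proof
    fix a
    have xz: "x \<noteq> z" using ExDecl by auto
    have u: "\<Sigma>'(z \<mapsto> IntV (a * 2 ^ 1)) = (\<Sigma>(z \<mapsto> IntV (2 * a)))(x \<mapsto> default_val t)"
      using ExDecl(1) xz by (simp add: fun_upd_twist mult.commute)
    have "exec (\<Sigma>(z \<mapsto> IntV (2 * a))) (Decl t x) (\<Sigma>'(z \<mapsto> IntV (a * 2 ^ 1))) 1
      (max (sz_store (\<Sigma>(z \<mapsto> IntV (2 * a)))) (sz_store (\<Sigma>'(z \<mapsto> IntV (a * 2 ^ 1)))))"
      by (rule exec_execs_exec_loop.ExDecl[OF u])
    from step2[OF this] have "\<exists>c' m'. execs (\<Sigma>(z \<mapsto> IntV a)) (tr z (Decl t x)) (\<Sigma>'(z \<mapsto> IntV (a * 2 ^ 1))) c' m'"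
      by simp
    then show "\<exists>k. (\<exists>c' m'. execs (\<Sigma>(z \<mapsto> IntV a)) (tr z (Decl t x)) (\<Sigma>'(z \<mapsto> IntV (a * 2 ^ k))) c' m') \<and> 1 \<le> (K+1) * k"
      by (intro exI[of _ 1]) simp
  qed
next
  case (ExAssign x \<Sigma> e v \<Sigma>')
  show ?case
  proof
    fix a
    have xz: "x \<noteq> z" and ez: "z \<notin> evars e" using ExAssign by auto
    have u: "\<Sigma>'(z \<mapsto> IntV (a * 2 ^ 1)) = (\<Sigma>(z \<mapsto> IntV (2 * a)))(x \<mapsto> v)"
      using ExAssign(3) xz by (simp add: fun_upd_twist mult.commute)
    have d: "x \<in> dom (\<Sigma>(z \<mapsto> IntV (2 * a)))" using ExAssign(1) by simp
    have ev: "eval (\<Sigma>(z \<mapsto> IntV (2 * a))) e = Some v" using eval_indep[OF ez] ExAssign(2) by simp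
    have "exec (\<Sigma>(z \<mapsto> IntV (2 * a))) (Assign x e) (\<Sigma>'(z \<mapsto> IntV (a * 2 ^ 1))) (1 + ecost e)
      (max (sz_store (\<Sigma>(z \<mapsto> IntV (2 * a)))) (sz_store (\<Sigma>'(z \<mapsto> IntV (a * 2 ^ 1)))))"
      by (rule exec_execs_exec_loop.ExAssign[OF d ev u])
    from step2[OF this] have "\<exists>c' m'. execs (\<Sigma>(z \<mapsto> IntV a)) (tr z (Assign x e)) (\<Sigma>'(z \<mapsto> IntV (a * 2 ^ 1))) c' m'"
      by simp
    moreover have "1 + ecost e \<le> (K+1) * 1" using ExAssign.prems by simp
    ultimately show "\<exists>k. (\<exists>c' m'. execs (\<Sigma>(z \<mapsto> IntV a)) (tr z (Assign x e)) (\<Sigma>'(z \<mapsto> IntV (a * 2 ^ k))) c' m') \<and> 1 + ecost e \<le> (K+1) * k"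
      by blast
  qed
next
  case (ExBlock \<Sigma> ss \<Sigma>' c m)
  have h: "\<forall>s\<in>set ss. z \<notin> svars s \<and> kb s \<le> K"
    using ExBlock.prems member_le_sum_list[of _ "map kb ss"] by fastforce
  show ?case
  proof
    fix a
    obtain k c' m' where k: "execs (\<Sigma>(z \<mapsto> IntV (2 * a))) (concat (map (tr z) ss)) (\<Sigma>'(z \<mapsto> IntV (2 * a * 2 ^ k))) c' m'"
      "c \<le> (K+1) * k" using ExBlock.IH h by blast
    have "exec (\<Sigma>(z \<mapsto> IntV (2 * a))) (Block (concat (map (tr z) ss))) (\<Sigma>'(z \<mapsto> IntV (a * 2 ^ Suc k))) (1 + c') (max (sz_store (\<Sigma>(z \<mapsto> IntV (2 * a)))) m')"
      using exec_execs_exec_loop.ExBlock[OF k(1)] by (simp only: pow_step)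
    from step2[OF this] have "\<exists>c' m'. execs (\<Sigma>(z \<mapsto> IntV a)) (tr z (Block ss)) (\<Sigma>'(z \<mapsto> IntV (a * 2 ^ Suc k))) c' m'"
      by simp
    moreover have "1 + c \<le> (K+1) * Suc k" using cost_step[OF k(2), of 1] by simp
    ultimately show "\<exists>k. (\<exists>c' m'. execs (\<Sigma>(z \<mapsto> IntV a)) (tr z (Block ss)) (\<Sigma>'(z \<mapsto> IntV (a * 2 ^ k))) c' m') \<and> 1 + c \<le> (K+1) * k"
      by blast
  qed
next
  case (ExIfT \<Sigma> e s1 \<Sigma>' c m s2)
  show ?case
  proof
    fix a
    have ez: "z \<notin> evars e" and p1: "z \<notin> svars s1" "kb s1 \<le> K" and ce: "ecost e \<le> K + 1" using ExIfT.prems by auto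
    obtain k c' m' where k: "execs (\<Sigma>(z \<mapsto> IntV (2 * a))) (tr z s1) (\<Sigma>'(z \<mapsto> IntV (2 * a * 2 ^ k))) c' m'"
      "c \<le> (K+1) * k" using ExIfT.IH p1 by blast
    have ev: "eval (\<Sigma>(z \<mapsto> IntV (2 * a))) e = Some (BoolV True)" using eval_indep[OF ez] ExIfT(1) by simp
    have "exec (\<Sigma>(z \<mapsto> IntV (2 * a))) (Block (tr z s1)) (\<Sigma>'(z \<mapsto> IntV (a * 2 ^ Suc k))) (1 + c') (max (sz_store (\<Sigma>(z \<mapsto> IntV (2 * a)))) m')"
      using exec_execs_exec_loop.ExBlock[OF k(1)] by (simp only: pow_step)
    from exec_execs_exec_loop.ExIfT[OF ev this, of "Block (tr z s2)"]
    have "\<exists>c' m'. exec (\<Sigma>(z \<mapsto> IntV (2 * a))) (If e (Block (tr z s1)) (Block (tr z s2))) (\<Sigma>'(z \<mapsto> IntV (a * 2 ^ Suc k))) c' m'" by blast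
    then have "\<exists>c' m'. execs (\<Sigma>(z \<mapsto> IntV a)) (tr z (If e s1 s2)) (\<Sigma>'(z \<mapsto> IntV (a * 2 ^ Suc k))) c' m'"
      using step2 by fastforce
    moreover have "ecost e + c \<le> (K+1) * Suc k" using cost_step[OF k(2) ce] .
    ultimately show "\<exists>k. (\<exists>c' m'. execs (\<Sigma>(z \<mapsto> IntV a)) (tr z (If e s1 s2)) (\<Sigma>'(z \<mapsto> IntV (a * 2 ^ k))) c' m') \<and> ecost e + c \<le> (K+1) * k"
      by blast
  qed
next
  case (ExIfF \<Sigma> e s2 \<Sigma>' c m s1)
  show ?case
  proof
    fix a
    have ez: "z \<notin> evars e" and p1: "z \<notin> svars s2" "kb s2 \<le> K" and ce: "ecost e \<le> K + 1" using ExIfF.prems by auto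
    obtain k c' m' where k: "execs (\<Sigma>(z \<mapsto> IntV (2 * a))) (tr z s2) (\<Sigma>'(z \<mapsto> IntV (2 * a * 2 ^ k))) c' m'"
      "c \<le> (K+1) * k" using ExIfF.IH p1 by blast
    have ev: "eval (\<Sigma>(z \<mapsto> IntV (2 * a))) e = Some (BoolV False)" using eval_indep[OF ez] ExIfF(1) by simp
    have "exec (\<Sigma>(z \<mapsto> IntV (2 * a))) (Block (tr z s2)) (\<Sigma>'(z \<mapsto> IntV (a * 2 ^ Suc k))) (1 + c') (max (sz_store (\<Sigma>(z \<mapsto> IntV (2 * a)))) m')"
      using exec_execs_exec_loop.ExBlock[OF k(1)] by (simp only: pow_step)
    from exec_execs_exec_loop.ExIfF[OF ev this, of "Block (tr z s1)"]
    have "\<exists>c' m'. exec (\<Sigma>(z \<mapsto> IntV (2 * a))) (If e (Block (tr z s1)) (Block (tr z s2))) (\<Sigma>'(z \<mapsto> IntV (a * 2 ^ Suc k))) c' m'" by blast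
    then have "\<exists>c' m'. execs (\<Sigma>(z \<mapsto> IntV a)) (tr z (If e s1 s2)) (\<Sigma>'(z \<mapsto> IntV (a * 2 ^ Suc k))) c' m'"
      using step2 by fastforce
    moreover have "ecost e + c \<le> (K+1) * Suc k" using cost_step[OF k(2) ce] .
    ultimately show "\<exists>k. (\<exists>c' m'. execs (\<Sigma>(z \<mapsto> IntV a)) (tr z (If e s1 s2)) (\<Sigma>'(z \<mapsto> IntV (a * 2 ^ k))) c' m') \<and> ecost e + c \<le> (K+1) * k"
      by blast
  qed
next
  case (ExFor \<Sigma> e i x s \<Sigma>' c m)
  show ?case
  proof
    fix a
    have ez: "z \<notin> evars (bound_exp e)" and xz: "x \<noteq> z" and p1: "z \<notin> svars s" "kb s \<le> K"
      and ce: "ecost (bound_exp e) \<le> K + 1" using ExFor.prems by (auto simp: bound_exp_def)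
    obtain k c' m' where k: "exec_loop x (Block (tr z s)) 0 i (\<Sigma>(z \<mapsto> IntV (2 * a))) (\<Sigma>'(z \<mapsto> IntV (2 * a * 2 ^ k))) c' m'"
      "c \<le> (K+1) * k" using ExFor.IH xz p1 by blast
    have ev: "eval (\<Sigma>(z \<mapsto> IntV (2 * a))) (bound_exp e) = Some (IntV i)" using eval_indep[OF ez] ExFor(1) by simp
    from exec_execs_exec_loop.ExFor[OF ev k(1)]
    have "\<exists>c' m'. exec (\<Sigma>(z \<mapsto> IntV (2 * a))) (For x e (Block (tr z s))) (\<Sigma>'(z \<mapsto> IntV (a * 2 ^ Suc k))) c' m'"
      by (simp only: pow_step) blast
    then have "\<exists>c' m'. execs (\<Sigma>(z \<mapsto> IntV a)) (tr z (For x e s)) (\<Sigma>'(z \<mapsto> IntV (a * 2 ^ Suc k))) c' m'"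
      using step2 by fastforce
    moreover have "ecost (bound_exp e) + c \<le> (K+1) * Suc k" using cost_step[OF k(2) ce] .
    ultimately show "\<exists>k. (\<exists>c' m'. execs (\<Sigma>(z \<mapsto> IntV a)) (tr z (For x e s)) (\<Sigma>'(z \<mapsto> IntV (a * 2 ^ k))) c' m') \<and> ecost (bound_exp e) + c \<le> (K+1) * k"
      by blast
  qed
next
  case (ExNil \<Sigma>)
  show ?case
  proof
    fix a
    have "execs (\<Sigma>(z \<mapsto> IntV a)) [] (\<Sigma>(z \<mapsto> IntV (a * 2 ^ 0))) 0 (sz_store (\<Sigma>(z \<mapsto> IntV a)))"
      by (simp only: power_0 mult_1_right) (rule exec_execs_exec_loop.ExNil)
    then show "\<exists>k. (\<exists>c' m'. execs (\<Sigma>(z \<mapsto> IntV a)) (concat (map (tr z) [])) (\<Sigma>(z \<mapsto> IntV (a * 2 ^ k))) c' m') \<and> 0 \<le> (K+1) * k"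
      by (simp only: list.map concat.simps) blast
  qed
next
  case (ExCons \<Sigma> s \<Sigma>1 c1 m1 ss \<Sigma>' c2 m2)
  show ?case
  proof
    fix a
    have p: "z \<notin> svars s" "kb s \<le> K" "\<forall>s\<in>set ss. z \<notin> svars s \<and> kb s \<le> K" using ExCons.prems by auto
    obtain k1 ca ma where k1: "execs (\<Sigma>(z \<mapsto> IntV a)) (tr z s) (\<Sigma>1(z \<mapsto> IntV (a * 2 ^ k1))) ca ma" "c1 \<le> (K+1) * k1"
      using ExCons.IH(1)[OF p(1) p(2)] by blast
    obtain k2 cb mb where k2: "execs (\<Sigma>1(z \<mapsto> IntV (a * 2 ^ k1))) (concat (map (tr z) ss)) (\<Sigma>'(z \<mapsto> IntV (a * 2 ^ k1 * 2 ^ k2))) cb mb" "c2 \<le> (K+1) * k2"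
      using ExCons.IH(2)[OF p(3)] by blast
    have e: "a * 2 ^ k1 * 2 ^ k2 = a * 2 ^ (k1 + k2)" by (simp add: power_add)
    have "\<exists>c' m'. execs (\<Sigma>(z \<mapsto> IntV a)) (concat (map (tr z) (s # ss))) (\<Sigma>'(z \<mapsto> IntV (a * 2 ^ (k1 + k2)))) c' m'"
      using execs_append[OF k1(1) k2(1)] e by simp
    moreover have "c1 + c2 \<le> (K+1) * (k1 + k2)" using k1(2) k2(2) by (simp add: distrib_left)
    ultimately show "\<exists>k. (\<exists>c' m'. execs (\<Sigma>(z \<mapsto> IntV a)) (concat (map (tr z) (s # ss))) (\<Sigma>'(z \<mapsto> IntV (a * 2 ^ k))) c' m') \<and> c1 + c2 \<le> (K+1) * k"
      by blast
  qed
next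
  case (LoopDone j i x s \<Sigma>)
  show ?case
  proof
    fix a
    have "exec_loop x (Block (tr z s)) j i (\<Sigma>(z \<mapsto> IntV a)) (\<Sigma>(z \<mapsto> IntV (a * 2 ^ 0))) 0 (sz_store (\<Sigma>(z \<mapsto> IntV a)))"
      using exec_execs_exec_loop.LoopDone[OF LoopDone(1), of x "Block (tr z s)" "\<Sigma>(z \<mapsto> IntV a)"] by simp
    then show "\<exists>k. (\<exists>c' m'. exec_loop x (Block (tr z s)) j i (\<Sigma>(z \<mapsto> IntV a)) (\<Sigma>(z \<mapsto> IntV (a * 2 ^ k))) c' m') \<and> 0 \<le> (K+1) * k"
      by blast
  qed
next
  case (LoopStep j i \<Sigma> x s \<Sigma>1 c1 m1 \<Sigma>' c2 m2)
  show ?case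
  proof
    fix a
    have xz: "x \<noteq> z" using LoopStep.prems by simp
    obtain k1 ca ma where k1: "execs ((\<Sigma>(x \<mapsto> IntV j))(z \<mapsto> IntV a)) (tr z s) (\<Sigma>1(z \<mapsto> IntV (a * 2 ^ k1))) ca ma" "c1 \<le> (K+1) * k1"
      using LoopStep.IH(1) LoopStep.prems by blast
    have tw: "(\<Sigma>(x \<mapsto> IntV j))(z \<mapsto> IntV a) = (\<Sigma>(z \<mapsto> IntV a))(x \<mapsto> IntV j)" using xz by (simp add: fun_upd_twist)
    have b: "exec ((\<Sigma>(z \<mapsto> IntV a))(x \<mapsto> IntV j)) (Block (tr z s)) (\<Sigma>1(z \<mapsto> IntV (a * 2 ^ k1))) (1 + ca) (max (sz_store ((\<Sigma>(x \<mapsto> IntV j))(z \<mapsto> IntV a))) ma)"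
      using exec_execs_exec_loop.ExBlock[OF k1(1)] tw by simp
    obtain k2 cb mb where k2: "exec_loop x (Block (tr z s)) (j + 1) i (\<Sigma>1(z \<mapsto> IntV (a * 2 ^ k1))) (\<Sigma>'(z \<mapsto> IntV (a * 2 ^ k1 * 2 ^ k2))) cb mb" "c2 \<le> (K+1) * k2"
      using LoopStep.IH(2) LoopStep.prems by blast
    have e: "a * 2 ^ k1 * 2 ^ k2 = a * 2 ^ (k1 + k2)" by (simp add: power_add)
    have "\<exists>c' m'. exec_loop x (Block (tr z s)) j i (\<Sigma>(z \<mapsto> IntV a)) (\<Sigma>'(z \<mapsto> IntV (a * 2 ^ (k1 + k2)))) c' m'"
      using exec_execs_exec_loop.LoopStep[OF LoopStep(1) b k2(1)] e by auto
    moreover have "c1 + c2 \<le> (K+1) * (k1 + k2)" using k1(2) k2(2) by (simp add: distrib_left)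
    ultimately show "\<exists>k. (\<exists>c' m'. exec_loop x (Block (tr z s)) j i (\<Sigma>(z \<mapsto> IntV a)) (\<Sigma>'(z \<mapsto> IntV (a * 2 ^ k))) c' m') \<and> c1 + c2 \<le> (K+1) * k"
      by blast
  qed
qed

lemma has_ty_indep: "has_ty \<Gamma> l e t \<Longrightarrow> z \<notin> evars e \<Longrightarrow> has_ty (\<Gamma>(z \<mapsto> t')) l e t"
proof (induction rule: has_ty.induct)
  case (TyVar \<Gamma> x t l)
  then show ?case by (intro has_ty.TyVar) auto
next
  case (TyBool2 f \<Gamma> l e1 e2)
  have a: "has_ty (\<Gamma>(z \<mapsto> t')) l e1 TBool" "has_ty (\<Gamma>(z \<mapsto> t')) l e2 TBool" by (rule TyBool2.IH(1), use TyBool2.prems in simp) (rule TyBool2.IH(2), use TyBool2.prems in simp)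
  show ?case by (rule has_ty.TyBool2[OF TyBool2.hyps(1) a])
next
  case (TyCmp f \<Gamma> l e1 t1 e2 t2)
  have a: "has_ty (\<Gamma>(z \<mapsto> t')) l e1 t1" "has_ty (\<Gamma>(z \<mapsto> t')) l e2 t2" by (rule TyCmp.IH(1), use TyCmp.prems in simp) (rule TyCmp.IH(2), use TyCmp.prems in simp)
  show ?case by (rule has_ty.TyCmp[OF TyCmp.hyps(1) a \<open>t1 \<in> int_tys\<close> \<open>t2 \<in> int_tys\<close>])
next
  case (TyArith f \<Gamma> l e1 t1 e2 t2)
  have a: "has_ty (\<Gamma>(z \<mapsto> t')) l e1 t1" "has_ty (\<Gamma>(z \<mapsto> t')) l e2 t2" by (rule TyArith.IH(1), use TyArith.prems in simp) (rule TyArith.IH(2), use TyArith.prems in simp)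
  show ?case by (rule has_ty.TyArith[OF TyArith.hyps(1) a \<open>t1 \<in> int_tys\<close> \<open>t2 \<in> int_tys\<close>])
qed (auto intro: has_ty.intros)

inductive_cases seqNilE: "seq_ty \<Gamma> l [] \<Gamma>'"
inductive_cases seqConsE: "seq_ty \<Gamma> l (s # ss) \<Gamma>'"

lemma seq_append: "seq_ty \<Gamma> l xs \<Gamma>1 \<Longrightarrow> seq_ty \<Gamma>1 l ys \<Gamma>' \<Longrightarrow> seq_ty \<Gamma> l (xs @ ys) \<Gamma>'"
proof (induction xs arbitrary: \<Gamma>)
  case Nil
  then show ?case by (auto elim: seqNilE)
next
  case (Cons s xs)
  from Cons.prems(1) obtain \<Gamma>a where "st_ty \<Gamma> l s \<Gamma>a" "seq_ty \<Gamma>a l xs \<Gamma>1"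
    by (auto elim: seqConsE)
  then show ?case using Cons.IH Cons.prems(2) by (auto intro: TCons)
qed

lemma inc_ty: "\<Gamma> z = Some TInt \<Longrightarrow> st_ty \<Gamma> l (inc z) \<Gamma>"
proof -
  assume h: "\<Gamma> z = Some TInt"
  have v: "has_ty \<Gamma> l (Var z) TInt" by (rule TyVar) (rule h)
  have "has_ty \<Gamma> l (Op OPlus [Var z, Var z]) (tsup TInt TInt)"
    by (rule TyArith[OF _ v v]) (auto simp: int_tys_def)
  then have o: "has_ty \<Gamma> l (Op OPlus [Var z, Var z]) TInt" by simp
  show ?thesis unfolding inc_def
    by (rule TAssign[OF h _ o]) (auto simp: compat_def int_tys_def)
qed

lemma seq2: "\<Gamma> z = Some TInt \<Longrightarrow> st_ty \<Gamma> l s2 \<Gamma>2 \<Longrightarrow> seq_ty \<Gamma> l [inc z, s2] \<Gamma>2"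
  by (blast intro: TCons TNil inc_ty)

lemma ty_sim:
 "st_ty \<Gamma> l s \<Gamma>' \<Longrightarrow> z \<notin> svars s \<Longrightarrow> seq_ty (\<Gamma>(z \<mapsto> TInt)) l (tr z s) (\<Gamma>'(z \<mapsto> TInt))"
 "seq_ty \<Gamma> l ss \<Gamma>' \<Longrightarrow> (\<forall>s\<in>set ss. z \<notin> svars s) \<Longrightarrow> seq_ty (\<Gamma>(z \<mapsto> TInt)) l (concat (map (tr z) ss)) (\<Gamma>'(z \<mapsto> TInt))"
proof (induction rule: st_ty_seq_ty.inducts)
  case (TDecl \<Gamma> x l t)
  have xz: "x \<noteq> z" using TDecl by auto
  have "st_ty (\<Gamma>(z \<mapsto> TInt)) l (Decl t x) ((\<Gamma>(z \<mapsto> TInt))(x \<mapsto> t))"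
    using TDecl xz by (intro st_ty_seq_ty.TDecl) auto
  then have "seq_ty (\<Gamma>(z \<mapsto> TInt)) l [inc z, Decl t x] ((\<Gamma>(z \<mapsto> TInt))(x \<mapsto> t))"
    by (intro seq2) simp_all
  moreover have "(\<Gamma>(z \<mapsto> TInt))(x \<mapsto> t) = (\<Gamma>(x \<mapsto> t))(z \<mapsto> TInt)" using xz by (simp add: fun_upd_twist)
  ultimately show ?case by (simp only: tr.simps)
next
  case (TAssign \<Gamma> x tx l e t)
  have xz: "x \<noteq> z" and ez: "z \<notin> evars e" using TAssign by auto
  have "st_ty (\<Gamma>(z \<mapsto> TInt)) l (Assign x e) (\<Gamma>(z \<mapsto> TInt))"
    using TAssign xz has_ty_indep[OF TAssign(3) ez] by (intro st_ty_seq_ty.TAssign) auto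
  then have "seq_ty (\<Gamma>(z \<mapsto> TInt)) l [inc z, Assign x e] (\<Gamma>(z \<mapsto> TInt))" by (intro seq2) simp_all
  then show ?case by (simp only: tr.simps)
next
  case (TBlock \<Gamma> l ss \<Gamma>')
  have "st_ty (\<Gamma>(z \<mapsto> TInt)) l (Block (concat (map (tr z) ss))) (\<Gamma>(z \<mapsto> TInt))"
    by (rule st_ty_seq_ty.TBlock, rule TBlock.IH) (use TBlock.prems in simp)
  then have "seq_ty (\<Gamma>(z \<mapsto> TInt)) l [inc z, Block (concat (map (tr z) ss))] (\<Gamma>(z \<mapsto> TInt))" by (intro seq2) simp_all
  then show ?case by (simp only: tr.simps)
next
  case (TIf \<Gamma> l e s1 \<Gamma>1 s2 \<Gamma>2)
  have ez: "z \<notin> evars e" using TIf by auto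
  have "st_ty (\<Gamma>(z \<mapsto> TInt)) l (If e (Block (tr z s1)) (Block (tr z s2))) (\<Gamma>(z \<mapsto> TInt))"
  proof (rule st_ty_seq_ty.TIf)
    show "has_ty (\<Gamma>(z \<mapsto> TInt)) l e TBool" using has_ty_indep[OF TIf(1) ez] .
    show "st_ty (\<Gamma>(z \<mapsto> TInt)) l (Block (tr z s1)) (\<Gamma>(z \<mapsto> TInt))"
      by (rule st_ty_seq_ty.TBlock, rule TIf.IH(1)) (use TIf.prems in simp)
    show "st_ty (\<Gamma>(z \<mapsto> TInt)) l (Block (tr z s2)) (\<Gamma>(z \<mapsto> TInt))"
      by (rule st_ty_seq_ty.TBlock, rule TIf.IH(2)) (use TIf.prems in simp)
  qed
  then have "seq_ty (\<Gamma>(z \<mapsto> TInt)) l [inc z, If e (Block (tr z s1)) (Block (tr z s2))] (\<Gamma>(z \<mapsto> TInt))" by (intro seq2) simp_all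
  then show ?case by (simp only: tr.simps)
next
  case (TFor \<Gamma> l e x s \<Gamma>')
  have ez: "z \<notin> evars (bound_exp e)" and xz: "x \<noteq> z" using TFor by (auto simp: bound_exp_def)
  have b: "seq_ty ((\<Gamma>(x \<mapsto> TIInt))(z \<mapsto> TInt)) True (tr z s) (\<Gamma>'(z \<mapsto> TInt))"
    by (rule TFor.IH) (use TFor.prems in simp)
  have tw: "(\<Gamma>(x \<mapsto> TIInt))(z \<mapsto> TInt) = (\<Gamma>(z \<mapsto> TInt))(x \<mapsto> TIInt)" using xz by (simp add: fun_upd_twist)
  have "st_ty (\<Gamma>(z \<mapsto> TInt)) l (For x e (Block (tr z s))) (\<Gamma>(z \<mapsto> TInt))"
  proof (rule st_ty_seq_ty.TFor)
    show "has_ty (\<Gamma>(z \<mapsto> TInt)) l (bound_exp e) TIInt" using has_ty_indep[OF TFor(1) ez] .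
    show "(\<Gamma>(z \<mapsto> TInt)) x = None" using TFor xz by simp
    show "st_ty ((\<Gamma>(z \<mapsto> TInt))(x \<mapsto> TIInt)) True (Block (tr z s)) ((\<Gamma>(z \<mapsto> TInt))(x \<mapsto> TIInt))"
      using b tw by (metis st_ty_seq_ty.TBlock)
  qed
  then have "seq_ty (\<Gamma>(z \<mapsto> TInt)) l [inc z, For x e (Block (tr z s))] (\<Gamma>(z \<mapsto> TInt))" by (intro seq2) simp_all
  then show ?case by (simp only: tr.simps)
next
  case (TNil \<Gamma> l)
  then show ?case by (simp add: st_ty_seq_ty.TNil)
next
  case (TCons \<Gamma> l s \<Gamma>1 ss \<Gamma>')
  then show ?case using seq_append by auto
qed

definition prog' :: "string \<Rightarrow> prog \<Rightarrow> prog" where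
  "prog' z p = \<lparr>params = params p, body = Decl TInt z # Assign z (Num 1) # concat (map (tr z) (body p)), ret = Var z\<rparr>"

lemma wt':
  assumes "well_typed p" "z \<notin> set (params p)" "\<forall>s\<in>set (body p). z \<notin> svars s"
  shows "well_typed (prog' z p)"
proof -
  define \<Gamma>0 where "\<Gamma>0 = Map.empty (params p [\<mapsto>] replicate (length (params p)) TInt)"
  obtain \<Gamma>' t where h: "seq_ty \<Gamma>0 False (body p) \<Gamma>'" "has_ty \<Gamma>' False (ret p) t" "t \<in> int_tys"
    using assms(1) unfolding well_typed_def \<Gamma>0_def by blast
  have z0: "\<Gamma>0 z = None" unfolding \<Gamma>0_def using assms(2) by simp
  have d: "st_ty \<Gamma>0 False (Decl TInt z) (\<Gamma>0(z \<mapsto> TInt))" by (rule TDecl) (use z0 in simp_all)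
  have a: "st_ty (\<Gamma>0(z \<mapsto> TInt)) False (Assign z (Num 1)) (\<Gamma>0(z \<mapsto> TInt))"
    by (rule TAssign[where tx = TInt and t = TIInt]) (auto intro: TyNum simp: compat_def int_tys_def)
  have r: "seq_ty (\<Gamma>0(z \<mapsto> TInt)) False (concat (map (tr z) (body p))) (\<Gamma>'(z \<mapsto> TInt))"
    by (rule ty_sim(2)[OF h(1) assms(3)])
  have s: "seq_ty \<Gamma>0 False (body (prog' z p)) (\<Gamma>'(z \<mapsto> TInt))"
    unfolding prog'_def using TCons[OF d TCons[OF a r]] by simp
  have t: "has_ty (\<Gamma>'(z \<mapsto> TInt)) False (ret (prog' z p)) TInt"
    unfolding prog'_def by (simp add: TyVar)
  show ?thesis unfolding well_typed_def using s t \<Gamma>0_def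
    by (auto simp: prog'_def int_tys_def)
qed

lemma run':
  assumes "run p vs v c m" "z \<notin> set (params p)" "\<forall>s\<in>set (body p). z \<notin> svars s \<and> kb s \<le> K"
  shows "\<exists>k v' c' m'. run (prog' z p) vs v' c' m' \<and> k < sz_int v' \<and> c \<le> (K+1) * k + ecost (ret p)"
  using assms(1)
proof cases
  case (1 \<Sigma>0 \<Sigma>' c0 m0)
  have z0: "\<Sigma>0 z = None" using 1 assms(2) by simp
  have d: "exec \<Sigma>0 (Decl TInt z) (\<Sigma>0(z \<mapsto> IntV 0)) 1 (max (sz_store \<Sigma>0) (sz_store (\<Sigma>0(z \<mapsto> IntV 0))))"
    by (rule ExDecl) (simp add: default_val_def)
  have a: "exec (\<Sigma>0(z \<mapsto> IntV 0)) (Assign z (Num 1)) (\<Sigma>0(z \<mapsto> IntV 1)) (1 + ecost (Num 1))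
     (max (sz_store (\<Sigma>0(z \<mapsto> IntV 0))) (sz_store (\<Sigma>0(z \<mapsto> IntV 1))))"
    by (rule ExAssign) simp_all
  obtain k c' m' where k: "execs (\<Sigma>0(z \<mapsto> IntV 1)) (concat (map (tr z) (body p))) (\<Sigma>'(z \<mapsto> IntV (1 * 2 ^ k))) c' m'"
    "c0 \<le> (K+1) * k"
    using sim(2)[OF \<open>execs \<Sigma>0 (body p) \<Sigma>' c0 m0\<close> assms(3)] by blast
  have e: "execs \<Sigma>0 (body (prog' z p)) (\<Sigma>'(z \<mapsto> IntV (1 * 2 ^ k))) (1 + ((1 + ecost (Num 1)) + c'))
      (max (max (sz_store \<Sigma>0) (sz_store (\<Sigma>0(z \<mapsto> IntV 0)))) (max (max (sz_store (\<Sigma>0(z \<mapsto> IntV 0))) (sz_store (\<Sigma>0(z \<mapsto> IntV 1)))) m'))"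
    unfolding prog'_def using ExCons[OF d ExCons[OF a k(1)]] by simp
  have ev: "eval (\<Sigma>'(z \<mapsto> IntV (1 * 2 ^ k))) (ret (prog' z p)) = Some (IntV (2 ^ k))"
    by (simp add: prog'_def)
  have l: "length vs = length (params (prog' z p))" "\<Sigma>0 = Map.empty (params (prog' z p) [\<mapsto>] map IntV vs)"
    using 1 by (simp_all add: prog'_def)
  from run.intros[OF l e ev] have "\<exists>c' m'. run (prog' z p) vs (2 ^ k) c' m'" by blast
  moreover have "k < sz_int (2 ^ k)" by (rule sz_pow)
  moreover have "c \<le> (K+1) * k + ecost (ret p)" using 1 k(2) by simp
  ultimately show ?thesis by blast
qed

lemma T_ge1: "\<forall>n. T n \<ge> n \<Longrightarrow> n \<ge> 1 \<Longrightarrow> (1::nat) \<le> T n"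
  using le_trans by blast

lemma le_mult1: "1 \<le> t \<Longrightarrow> x \<le> x * (t::nat)"
  using mult_le_mono2[of 1 t x] by simp

lemma impl_13:
  assumes T: "\<forall>n. T n \<ge> n" and wt: "well_typed p" and b: "bigO_run T p (\<lambda>v c m. c)"
  shows "bigO_run T p (\<lambda>v c m. m)"
proof -
  obtain C N where CN: "\<forall>vs v c m. run p vs v c m \<longrightarrow> sz_inputs vs \<ge> N \<longrightarrow> c \<le> C * T (sz_inputs vs)"
    using b unfolding bigO_run_def by blast
  define L where "L = sum_list (map slit (body p)) + elit (ret p)"
  have L1: "\<forall>s\<in>set (body p). slit s \<le> L" unfolding L_def
    using member_le_sum_list[of _ "map slit (body p)"] by fastforce
  have L2: "elit (ret p) \<le> L" unfolding L_def by simp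
  show ?thesis unfolding bigO_run_def
  proof (rule exI[of _ "C + L + 1"], rule exI[of _ "max N 1"], intro allI impI)
    fix vs v c m assume r: "run p vs v c m" and n: "max N 1 \<le> sz_inputs vs"
    let ?n = "sz_inputs vs"
    have t1: "1 \<le> T ?n" using T_ge1[OF T] n by simp
    have tn: "?n \<le> T ?n" using T by simp
    have c: "c \<le> C * T ?n" using CN r n by (meson max.boundedE)
    have "m \<le> max ?n L + c" using run_sz[OF r L1 L2] by simp
    also have "\<dots> \<le> ?n + L + c" by simp
    also have "\<dots> \<le> T ?n + L * T ?n + C * T ?n" using c tn le_mult1[OF t1, of L] by linarith
    also have "\<dots> = (C + L + 1) * T ?n" by (simp add: algebra_simps)
    finally show "m \<le> (C + L + 1) * T ?n" .
  qed
qed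

lemma impl_32:
  assumes T: "\<forall>n. T n \<ge> n" and wt: "well_typed p" and b: "bigO_run T p (\<lambda>v c m. m)"
  shows "bigO_run T p (\<lambda>v c m. sz_int v)"
proof -
  obtain C N where CN: "\<forall>vs v c m. run p vs v c m \<longrightarrow> sz_inputs vs \<ge> N \<longrightarrow> m \<le> C * T (sz_inputs vs)"
    using b unfolding bigO_run_def by blast
  define L where "L = sum_list (map slit (body p)) + elit (ret p)"
  have L1: "\<forall>s\<in>set (body p). slit s \<le> L" unfolding L_def
    using member_le_sum_list[of _ "map slit (body p)"] by fastforce
  have L2: "elit (ret p) \<le> L" unfolding L_def by simp
  define E where "E = L + ecost (ret p)"
  show ?thesis unfolding bigO_run_def
  proof (rule exI[of _ "C + E"], rule exI[of _ "max N 1"], intro allI impI)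
    fix vs v c m assume r: "run p vs v c m" and n: "max N 1 \<le> sz_inputs vs"
    let ?n = "sz_inputs vs"
    have t1: "1 \<le> T ?n" using T_ge1[OF T] n by simp
    have c: "m \<le> C * T ?n" using CN r n by (meson max.boundedE)
    have "sz_int v \<le> m + E" using run_sz[OF r L1 L2] E_def by simp
    also have "\<dots> \<le> C * T ?n + E * T ?n" using c le_mult1[OF t1, of E] by linarith
    also have "\<dots> = (C + E) * T ?n" by (simp add: algebra_simps)
    finally have "sz_int v \<le> (C + E) * T ?n" .
    then show "sz_int v \<le> (C + E) * T ?n" .
  qed
qed

lemma impl_21:
  assumes T: "\<forall>n. T n \<ge> n" and wt: "well_typed p"
    and all: "\<forall>p. well_typed p \<longrightarrow> bigO_run T p (\<lambda>v c m. sz_int v)"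
  shows "bigO_run T p (\<lambda>v c m. c)"
proof -
  have fin: "finite (set (params p) \<union> \<Union> (svars ` set (body p)))" by (simp add: finite_svars)
  obtain z where z: "z \<notin> set (params p) \<union> \<Union> (svars ` set (body p))"
    using ex_new_if_finite[OF infinite_UNIV_listI fin] by blast
  have z1: "z \<notin> set (params p)" and z2: "\<forall>s\<in>set (body p). z \<notin> svars s" using z by auto
  have "well_typed (prog' z p)" by (rule wt'[OF wt z1 z2])
  then obtain C N where CN: "\<forall>vs v c m. run (prog' z p) vs v c m \<longrightarrow> sz_inputs vs \<ge> N \<longrightarrow> sz_int v \<le> C * T (sz_inputs vs)"
    using all unfolding bigO_run_def by blast
  define K where "K = sum_list (map kb (body p))"
  have K1: "\<forall>s\<in>set (body p). z \<notin> svars s \<and> kb s \<le> K" unfolding K_def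
    using z2 member_le_sum_list[of _ "map kb (body p)"] by fastforce
  define E where "E = ecost (ret p)"
  show ?thesis unfolding bigO_run_def
  proof (rule exI[of _ "(K+1) * C + E"], rule exI[of _ "max N 1"], intro allI impI)
    fix vs v c m assume r: "run p vs v c m" and n: "max N 1 \<le> sz_inputs vs"
    let ?n = "sz_inputs vs"
    have t1: "1 \<le> T ?n" using T_ge1[OF T] n by simp
    obtain k v' c' m' where k: "run (prog' z p) vs v' c' m'" "k < sz_int v'" "c \<le> (K+1) * k + E"
      using run'[OF r z1 K1] E_def by blast
    have "sz_int v' \<le> C * T ?n" using CN k(1) n by (meson max.boundedE)
    then have kk: "k \<le> C * T ?n" using k(2) by simp
    have "c \<le> (K+1) * k + E" by (rule k(3))
    also have "\<dots> \<le> (K+1) * (C * T ?n) + E * T ?n" using mult_le_mono2[OF kk, of "K+1"] le_mult1[OF t1, of E]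
      by linarith
    also have "\<dots> = ((K+1) * C + E) * T ?n" by (simp add: algebra_simps)
    finally show "c \<le> ((K+1) * C + E) * T ?n" .
  qed
qed

theorem lemma3:
  fixes T :: "nat \<Rightarrow> nat"
  assumes "\<forall>n. T n \<ge> n"
  shows "((\<forall>p. well_typed p \<longrightarrow> bigO_run T p (\<lambda>v c m. c))
          \<longleftrightarrow> (\<forall>p. well_typed p \<longrightarrow> bigO_run T p (\<lambda>v c m. sz_int v)))
       \<and> ((\<forall>p. well_typed p \<longrightarrow> bigO_run T p (\<lambda>v c m. sz_int v))
          \<longleftrightarrow> (\<forall>p. well_typed p \<longrightarrow> bigO_run T p (\<lambda>v c m. m)))"
  using impl_13[OF assms] impl_32[OF assms] impl_21[OF assms] by blast

end
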